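(* Let $N\ge 1$, $h,\varepsilon\in(0,1)$, and let $V=(v_1,\dots,v_N)\in[-1,1]^N$ satisfy $v_1\le v_2\le\dots\le v_N$. For $k=1,\dots,N$ let $J(v_k)=\{l\in\{1,\dots,N\}: |v_l-v_k|\le\varepsilon\}$, let $I(v_k)$ be its cardinality, and set $$\Delta_k=\frac{h}{I(v_k)}\sum_{l\in J(v_k)} v_l .$$ Then $\Delta_{k+1}\ge \Delta_k$ for $k=1,\dots,N-1$.
   Context: $\Delta_k=w_k(V)-v_k$, where $w_k(V)=v_k+\frac{h}{I(v_k)}\sum_{l\in J(v_k)}v_l$ is the unclipped update of the opinion model. *)

theory Defs
  imports Main Complex_Main
begin

definition J :: "nat \<Rightarrow> real \<Rightarrow> (nat \<Rightarrow> real) \<Rightarrow> nat \<Rightarrow> nat set" where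
  "J N \<epsilon> v k = {l \<in> {1..N}. \<bar>v l - v k\<bar> \<le> \<epsilon>}"

definition I :: "nat \<Rightarrow> real \<Rightarrow> (nat \<Rightarrow> real) \<Rightarrow> nat \<Rightarrow> nat" where
  "I N \<epsilon> v k = card (J N \<epsilon> v k)"

definition Delta :: "nat \<Rightarrow> real \<Rightarrow> real \<Rightarrow> (nat \<Rightarrow> real) \<Rightarrow> nat \<Rightarrow> real" where
  "Delta N h \<epsilon> v k = h / real (I N \<epsilon> v k) * (\<Sum>l\<in>J N \<epsilon> v k. v l)"

end

theory Submission
  imports Defs
begin

lemma mean_mono:
  fixes v :: "nat \<Rightarrow> real"
  assumes fA: "finite A" and fB: "finite B"
    and hA: "\<And>a b. a \<in> A \<Longrightarrow> a \<notin> B \<Longrightarrow> b \<in> B \<Longrightarrow> v a \<le> v b"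
    and hB: "\<And>a b. a \<in> A \<Longrightarrow> b \<in> B \<Longrightarrow> b \<notin> A \<Longrightarrow> v a \<le> v b"
  shows "real (card B) * (\<Sum>a\<in>A. v a) \<le> real (card A) * (\<Sum>b\<in>B. v b)"
proof -
  let ?C = "A \<inter> B"
  let ?f = "\<lambda>p. v (snd p) - v (fst p)"
  have fAB: "finite (A \<times> B)" using fA fB by simp
  have sub: "?C \<times> ?C \<subseteq> A \<times> B" by auto
  have s1: "sum ?f (A \<times> B) = sum ?f (?C \<times> ?C) + sum ?f (A \<times> B - ?C \<times> ?C)"
    using sum.subset_diff[OF sub fAB, of ?f] by (simp add: add.commute)
  have fC: "finite ?C" using fA by simp
  have "sum ?f (?C \<times> ?C) = (\<Sum>a\<in>?C. \<Sum>b\<in>?C. v b - v a)"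
    by (simp add: sum.cartesian_product split_def)
  also have "\<dots> = (\<Sum>a\<in>?C. \<Sum>b\<in>?C. v b) - (\<Sum>a\<in>?C. \<Sum>b\<in>?C. v a)"
    by (simp add: sum_subtractf)
  also have "\<dots> = 0" using sum.swap[of "\<lambda>a b. v b" ?C ?C] by simp
  finally have s2: "sum ?f (?C \<times> ?C) = 0" .
  have s3: "sum ?f (A \<times> B - ?C \<times> ?C) \<ge> 0"
  proof (rule sum_nonneg)
    fix p assume p: "p \<in> A \<times> B - ?C \<times> ?C"
    then obtain a b where ab: "p = (a,b)" "a \<in> A" "b \<in> B" "a \<notin> B \<or> b \<notin> A" by auto
    then have "v a \<le> v b" using hA hB by blast
    then show "?f p \<ge> 0" using ab by simp
  qed
  have "sum ?f (A \<times> B) = (\<Sum>a\<in>A. \<Sum>b\<in>B. v b - v a)"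
    by (simp add: sum.cartesian_product split_def)
  also have "\<dots> = (\<Sum>a\<in>A. \<Sum>b\<in>B. v b) - (\<Sum>a\<in>A. \<Sum>b\<in>B. v a)"
    by (simp add: sum_subtractf)
  also have "\<dots> = real (card A) * (\<Sum>b\<in>B. v b) - real (card B) * (\<Sum>a\<in>A. v a)"
    by (simp add: sum_distrib_left sum_distrib_right mult.commute)
  finally show ?thesis using s1 s2 s3 by linarith
qed

theorem lemma2:
  fixes N :: nat and h \<epsilon> :: real and v :: "nat \<Rightarrow> real"
  assumes "N \<ge> 1"
    and "0 < h" "h < 1" "0 < \<epsilon>" "\<epsilon> < 1"
    and "\<And>k. k \<in> {1..N} \<Longrightarrow> v k \<in> {-1..1}"
    and "\<And>k. 1 \<le> k \<Longrightarrow> k < N \<Longrightarrow> v k \<le> v (k + 1)"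
  shows "\<forall>k\<in>{1..N-1}. Delta N h \<epsilon> v (k + 1) \<ge> Delta N h \<epsilon> v k"
proof
  fix k assume k: "k \<in> {1..N-1}"
  define A where "A = J N \<epsilon> v k"
  define B where "B = J N \<epsilon> v (k+1)"
  have mono: "v k \<le> v (k+1)" using assms(7) k by auto
  have fA: "finite A" and fB: "finite B" unfolding A_def B_def J_def by auto
  have "k \<in> A" using k assms(4) unfolding A_def J_def by auto
  then have cA: "card A > 0" using fA card_gt_0_iff by blast
  have "k+1 \<in> B" using k assms(4) unfolding B_def J_def by auto
  then have cB: "card B > 0" using fB card_gt_0_iff by blast
  have key: "real (card B) * (\<Sum>a\<in>A. v a) \<le> real (card A) * (\<Sum>b\<in>B. v b)"
  proof (rule mean_mono[OF fA fB])
    fix a b assume "a \<in> A" "a \<notin> B" "b \<in> B"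
    then show "v a \<le> v b" using mono unfolding A_def B_def J_def by auto
  next
    fix a b assume "a \<in> A" "b \<in> B" "b \<notin> A"
    then show "v a \<le> v b" using mono unfolding A_def B_def J_def by auto
  qed
  have "(\<Sum>a\<in>A. v a) / real (card A) \<le> (\<Sum>b\<in>B. v b) / real (card B)"
    using key cA cB by (simp add: divide_simps mult.commute)
  then have "h * ((\<Sum>a\<in>A. v a) / real (card A)) \<le> h * ((\<Sum>b\<in>B. v b) / real (card B))"
    using assms(2) by (rule mult_left_mono[OF _ less_imp_le])
  then show "Delta N h \<epsilon> v (k + 1) \<ge> Delta N h \<epsilon> v k"
    unfolding Delta_def I_def A_def[symmetric] B_def[symmetric] by simp
qed

end
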